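(* Let $\Phi=\forall u_1\ldots\forall u_n\exists e_1(D_1)\ldots\exists e_m(D_m).\varphi$ be a DQBF with prefix $\mathcal{Q}$, let $A$ be a set of arbiter variables with arbiter clauses $\varphi_A$, and let $\Phi'=\mathcal{Q}\exists A(\emptyset).\varphi\wedge\varphi_A$. Then $\Phi$ is true if and only if $\Phi'$ is true.
   Context: For a set $V$ of variables, $[V]$ is the set of assignments $V\to\{\textsc{true},\textsc{false}\}$; assignments are identified with terms of the literals they make true, $\neg\sigma$ is the clause of the negations of these literals, and $\sigma|_W$ denotes restriction. A DQBF is $\forall u_1\ldots\forall u_n\exists e_1(D_1)\ldots\exists e_m(D_m).\varphi$ with pairwise distinct variables, $U=\{u_i\}$, $E=\{e_j\}$, dependency sets $D(e_j)=D_j\subseteq U$, and $\varphi$ a CNF over $U\cup E$; a model is a family $F=(F_e)_{e}$ with $F_e:[D(e)]\to\{\textsc{true},\textsc{false}\}$ such that for every $\sigma\in[U]$, $\sigma\cup F(\sigma)$ satisfies the matrix, where $F(\sigma)$ assigns each existential $e$ the value $F_e(\sigma|_{D(e)})$; the DQBF is true iff it has a model. Arbiter variables: for $e\in E$, $\sigma\in[D(e)]$, $e^\sigma$ is a fresh variable; for a set $A$ of them, $\varphi_A=\bigwedge_{e^\sigma\in A}\big((e^\sigma\vee\neg\sigma\vee\neg e)\wedge(\neg e^\sigma\vee\neg\sigma\vee e)\big)$. For a CNF $\psi$, $\mathcal{Q}\exists A(\emptyset).\psi$ is the DQBF whose prefix is that of $\Phi$ extended by every variable of $A$ as an existential variable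 with empty dependency set, and whose matrix is $\psi$. *)

theory Defs
  imports Main
begin

(* Literals are pairs (variable, polarity); (x, True) is x, (x, False) is \<not>x. *)

type_synonym 'x lit = "'x \<times> bool"
type_synonym 'x clause = "'x lit set"
type_synonym 'x cnf = "'x clause set"
type_synonym 'x assign = "'x \<rightharpoonup> bool"

definition sat_lit :: "'x assign \<Rightarrow> 'x lit \<Rightarrow> bool" where
  "sat_lit \<alpha> l = (\<alpha> (fst l) = Some (snd l))"

definition sat_clause :: "'x assign \<Rightarrow> 'x clause \<Rightarrow> bool" where
  "sat_clause \<alpha> C = (\<exists>l\<in>C. sat_lit \<alpha> l)"

definition sat_cnf :: "'x assign \<Rightarrow> 'x cnf \<Rightarrow> bool" where
  "sat_cnf \<alpha> \<phi> = (\<forall>C\<in>\<phi>. sat_clause \<alpha> C)"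

definition cnf_vars :: "'x cnf \<Rightarrow> 'x set" where
  "cnf_vars \<phi> = {fst l | l C. C \<in> \<phi> \<and> l \<in> C}"

definition assignments :: "'x set \<Rightarrow> 'x assign set" where
  "assignments V = {\<sigma>. dom \<sigma> = V}"

definition neg_term :: "'x assign \<Rightarrow> 'x clause" where
  "neg_term \<sigma> = {(v, \<not> b) | v b. \<sigma> v = Some b}"

(* A DQBF: universal variables, existential variables, dependency sets, CNF matrix.
   (The order of the prefix is irrelevant for the semantics.) *)
record 'x dqbf =
  univ :: "'x set"
  exis :: "'x set"
  dep :: "'x \<Rightarrow> 'x set"
  matrix :: "'x cnf"

definition wf_dqbf :: "'x dqbf \<Rightarrow> bool" where
  "wf_dqbf \<Phi> \<longleftrightarrow> finite (univ \<Phi>) \<and> finite (exis \<Phi>) \<and> univ \<Phi> \<inter> exis \<Phi> = {}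
     \<and> (\<forall>e\<in>exis \<Phi>. dep \<Phi> e \<subseteq> univ \<Phi>)
     \<and> finite (matrix \<Phi>) \<and> (\<forall>C\<in>matrix \<Phi>. finite C)
     \<and> cnf_vars (matrix \<Phi>) \<subseteq> univ \<Phi> \<union> exis \<Phi>"

definition skolem_assign :: "'x dqbf \<Rightarrow> ('x \<Rightarrow> 'x assign \<Rightarrow> bool) \<Rightarrow> 'x assign \<Rightarrow> 'x assign" where
  "skolem_assign \<Phi> F \<sigma> = (\<lambda>x. if x \<in> exis \<Phi> then Some (F x (\<sigma> |` dep \<Phi> x)) else None)"

(* F is a model; F e only matters on [D(e)] since \<sigma>|_{D(e)} \<in> [D(e)] *)
definition is_model :: "'x dqbf \<Rightarrow> ('x \<Rightarrow> 'x assign \<Rightarrow> bool) \<Rightarrow> bool" where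
  "is_model \<Phi> F \<longleftrightarrow> (\<forall>\<sigma>\<in>assignments (univ \<Phi>). sat_cnf (\<sigma> ++ skolem_assign \<Phi> F \<sigma>) (matrix \<Phi>))"

definition dqbf_true :: "'x dqbf \<Rightarrow> bool" where
  "dqbf_true \<Phi> \<longleftrightarrow> (\<exists>F. is_model \<Phi> F)"

(* Variables of the extended formula: original variables and fresh arbiter variables e^\<sigma> *)
datatype 'v avar = Orig 'v | Arb 'v "'v \<rightharpoonup> bool"

definition lift_lit :: "'v lit \<Rightarrow> 'v avar lit" where
  "lift_lit l = (Orig (fst l), snd l)"

definition lift_assign :: "'v assign \<Rightarrow> 'v avar assign" where
  "lift_assign \<sigma> = (\<lambda>x. case x of Orig v \<Rightarrow> \<sigma> v | Arb _ _ \<Rightarrow> None)"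

definition arbiter_index :: "'v dqbf \<Rightarrow> ('v \<times> 'v assign) set" where
  "arbiter_index \<Phi> = {(e, \<sigma>). e \<in> exis \<Phi> \<and> \<sigma> \<in> assignments (dep \<Phi> e)}"

(* \<phi>_A = \<And>_{e^\<sigma> \<in> A} (e^\<sigma> \<or> \<not>\<sigma> \<or> \<not>e) \<and> (\<not>e^\<sigma> \<or> \<not>\<sigma> \<or> e) *)
definition arbiter_clauses :: "('v \<times> 'v assign) set \<Rightarrow> 'v avar cnf" where
  "arbiter_clauses A =
     (\<Union>(e, \<sigma>)\<in>A.
        {insert (Arb e \<sigma>, True) (insert (Orig e, False) (neg_term (lift_assign \<sigma>))),
         insert (Arb e \<sigma>, False) (insert (Orig e, True) (neg_term (lift_assign \<sigma>)))})"

definition add_arbiters :: "'v dqbf \<Rightarrow> ('v \<times> 'v assign) set \<Rightarrow> 'v avar dqbf" where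
  "add_arbiters \<Phi> A =
     \<lparr> univ = Orig ` univ \<Phi>,
       exis = Orig ` exis \<Phi> \<union> (\<lambda>(e, \<sigma>). Arb e \<sigma>) ` A,
       dep = (\<lambda>x. case x of Orig e \<Rightarrow> Orig ` dep \<Phi> e | Arb _ _ \<Rightarrow> {}),
       matrix = (\<lambda>C. lift_lit ` C) ` matrix \<Phi> \<union> arbiter_clauses A \<rparr>"

end

theory Submission
  imports Defs
begin

definition unl :: "'v avar assign \<Rightarrow> 'v assign" where
  "unl \<tau> = (\<lambda>v. \<tau> (Orig v))"

lemma unl_restrict: "unl (\<tau> |` (Orig ` D)) = (unl \<tau>) |` D"
  by (auto simp: unl_def restrict_map_def fun_eq_iff)

lemma lift_restrict: "lift_assign \<sigma> |` (Orig ` D) = lift_assign (\<sigma> |` D)"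
  by (auto simp: lift_assign_def restrict_map_def fun_eq_iff split: avar.split)

lemma unl_lift: "unl (lift_assign \<sigma>) = \<sigma>"
  by (simp add: unl_def lift_assign_def)

lemma sat_lift_clause:
  assumes "\<And>v. \<alpha>' (Orig v) = \<alpha> v" "sat_clause \<alpha> C"
  shows "sat_clause \<alpha>' (lift_lit ` C)"
  using assms by (auto simp: sat_clause_def sat_lit_def lift_lit_def)

lemma sat_lift_clause':
  assumes "\<And>v. \<alpha>' (Orig v) = \<alpha> v" "sat_clause \<alpha>' (lift_lit ` C)"
  shows "sat_clause \<alpha> C"
  using assms by (auto simp: sat_clause_def sat_lit_def lift_lit_def)

lemma fwd:
  assumes wf: "wf_dqbf \<Phi>" and A: "A \<subseteq> arbiter_index \<Phi>" and M: "is_model \<Phi> F"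
  shows "dqbf_true (add_arbiters \<Phi> A)"
proof -
  define F' where "F' x \<tau> = (case x of Orig e \<Rightarrow> F e (unl \<tau>) | Arb e s \<Rightarrow> F e s)" for x \<tau>
  have "is_model (add_arbiters \<Phi> A) F'"
    unfolding is_model_def
  proof
    fix \<sigma>' assume s': "\<sigma>' \<in> assignments (univ (add_arbiters \<Phi> A))"
    define \<sigma> where "\<sigma> = unl \<sigma>'"
    have domU: "dom \<sigma>' = Orig ` univ \<Phi>" using s' by (simp add: assignments_def add_arbiters_def)
    have "dom \<sigma> = univ \<Phi>"
    proof -
      have "dom \<sigma> = {v. Orig v \<in> dom \<sigma>'}" by (auto simp: \<sigma>_def unl_def)
      then show ?thesis using domU by auto
    qed
    then have "\<sigma> \<in> assignments (univ \<Phi>)" by (simp add: assignments_def)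
    with M have sat: "sat_cnf (\<sigma> ++ skolem_assign \<Phi> F \<sigma>) (matrix \<Phi>)" by (simp add: is_model_def)
    define \<alpha> where "\<alpha> = \<sigma> ++ skolem_assign \<Phi> F \<sigma>"
    define \<alpha>' where "\<alpha>' = \<sigma>' ++ skolem_assign (add_arbiters \<Phi> A) F' \<sigma>'"
    have eq: "\<alpha>' (Orig v) = \<alpha> v" for v
    proof (cases "v \<in> exis \<Phi>")
      case True
      have "\<alpha>' (Orig v) = Some (F' (Orig v) (\<sigma>' |` dep (add_arbiters \<Phi> A) (Orig v)))"
        using True by (simp add: \<alpha>'_def skolem_assign_def add_arbiters_def)
      also have "\<dots> = Some (F v (\<sigma> |` dep \<Phi> v))"
        by (simp add: F'_def add_arbiters_def unl_restrict \<sigma>_def)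
      also have "\<dots> = \<alpha> v" using True by (simp add: \<alpha>_def skolem_assign_def)
      finally show ?thesis .
    next
      case False
      have "\<alpha>' (Orig v) = \<sigma>' (Orig v)"
        using False by (auto simp: \<alpha>'_def map_add_def skolem_assign_def add_arbiters_def)
      also have "\<dots> = \<alpha> v" using False
        by (simp add: \<alpha>_def map_add_def skolem_assign_def \<sigma>_def unl_def)
      finally show ?thesis .
    qed
    have arb: "\<alpha>' (Arb e s) = Some (F e s)" if "(e, s) \<in> A" for e s
      using that by (auto simp: \<alpha>'_def map_add_def skolem_assign_def add_arbiters_def F'_def)
    show "sat_cnf \<alpha>' (matrix (add_arbiters \<Phi> A))"
      unfolding sat_cnf_def
    proof
      fix C assume C: "C \<in> matrix (add_arbiters \<Phi> A)"
      then consider (o) C0 where "C0 \<in> matrix \<Phi>" "C = lift_lit ` C0" | (a) "C \<in> arbiter_clauses A"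
        by (auto simp: add_arbiters_def)
      then show "sat_clause \<alpha>' C"
      proof cases
        case o
        then show ?thesis using sat sat_lift_clause[of \<alpha>' \<alpha>, OF eq] by (auto simp: sat_cnf_def \<alpha>_def)
      next
        case a
        then obtain e s where es: "(e, s) \<in> A" and
          Cs: "C = insert (Arb e s, True) (insert (Orig e, False) (neg_term (lift_assign s))) \<or>
               C = insert (Arb e s, False) (insert (Orig e, True) (neg_term (lift_assign s)))"
          by (auto simp: arbiter_clauses_def)
        have eE: "e \<in> exis \<Phi>" and ds: "dom s = dep \<Phi> e" using es A
          by (auto simp: arbiter_index_def assignments_def)
        show ?thesis
        proof (cases "\<sigma> |` dep \<Phi> e = s")
          case True
          have "\<alpha> e = Some (F e s)" using eE True
            by (simp add: \<alpha>_def map_add_def skolem_assign_def)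
          then have "\<alpha>' (Orig e) = Some (F e s)" using eq by simp
          then have "sat_lit \<alpha>' (Arb e s, True) \<or> sat_lit \<alpha>' (Orig e, False)"
            "sat_lit \<alpha>' (Arb e s, False) \<or> sat_lit \<alpha>' (Orig e, True)"
            using arb[OF es] by (cases "F e s"; simp add: sat_lit_def)+
          then show ?thesis using Cs unfolding sat_clause_def by blast
        next
          case False
          then obtain v where v: "(\<sigma> |` dep \<Phi> e) v \<noteq> s v" by blast
          then have vD: "v \<in> dep \<Phi> e" by (metis domIff ds restrict_out)
          then obtain b where b: "s v = Some b" using ds by auto
          have vU: "v \<in> univ \<Phi>" using vD eE wf by (auto simp: wf_dqbf_def)
          then have vnE: "v \<notin> exis \<Phi>" using wf by (auto simp: wf_dqbf_def)
          have "\<sigma> v \<noteq> Some b" using v vD b by simp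
          moreover have "\<sigma> v \<noteq> None" using vU \<open>dom \<sigma> = univ \<Phi>\<close> by auto
          ultimately have "\<sigma> v = Some (\<not> b)" by (cases "\<sigma> v") auto
          then have "\<alpha> v = Some (\<not> b)" using vnE
            by (simp add: \<alpha>_def map_add_def skolem_assign_def)
          then have "\<alpha>' (Orig v) = Some (\<not> b)" using eq by simp
          moreover have "(Orig v, \<not> b) \<in> neg_term (lift_assign s)"
            using b by (simp add: neg_term_def lift_assign_def)
          moreover have "(Orig v, \<not> b) \<in> C" using Cs calculation(2) by blast
          ultimately show ?thesis unfolding sat_clause_def sat_lit_def by force
        qed
      qed
    qed
  qed
  then show ?thesis by (auto simp: dqbf_true_def)
qed

lemma bwd:
  assumes M: "is_model (add_arbiters \<Phi> A) F'"
  shows "dqbf_true \<Phi>"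
proof -
  define F where "F e s = F' (Orig e) (lift_assign s)" for e s
  have "is_model \<Phi> F"
    unfolding is_model_def
  proof
    fix \<sigma> assume s: "\<sigma> \<in> assignments (univ \<Phi>)"
    define \<sigma>' where "\<sigma>' = lift_assign \<sigma>"
    have "dom \<sigma>' = Orig ` dom \<sigma>"
      proof (intro set_eqI iffI)
      fix x assume "x \<in> dom \<sigma>'" then show "x \<in> Orig ` dom \<sigma>"
        by (cases x) (auto simp: \<sigma>'_def lift_assign_def)
    next
      fix x assume "x \<in> Orig ` dom \<sigma>" then show "x \<in> dom \<sigma>'"
        by (auto simp: \<sigma>'_def lift_assign_def)
    qed
    then have "\<sigma>' \<in> assignments (univ (add_arbiters \<Phi> A))"
      using s by (simp add: assignments_def add_arbiters_def)
    with M have sat: "sat_cnf (\<sigma>' ++ skolem_assign (add_arbiters \<Phi> A) F' \<sigma>') (matrix (add_arbiters \<Phi> A))"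
      by (simp add: is_model_def)
    define \<alpha> where "\<alpha> = \<sigma> ++ skolem_assign \<Phi> F \<sigma>"
    define \<alpha>' where "\<alpha>' = \<sigma>' ++ skolem_assign (add_arbiters \<Phi> A) F' \<sigma>'"
    have eq: "\<alpha>' (Orig v) = \<alpha> v" for v
      by (auto simp: \<alpha>_def \<alpha>'_def map_add_def skolem_assign_def add_arbiters_def F_def
          lift_restrict \<sigma>'_def split: option.split) (simp_all add: lift_assign_def)
    show "sat_cnf \<alpha> (matrix \<Phi>)"
      unfolding sat_cnf_def
    proof
      fix C assume "C \<in> matrix \<Phi>"
      then have "sat_clause \<alpha>' (lift_lit ` C)" using sat
        by (auto simp: sat_cnf_def \<alpha>'_def add_arbiters_def)
      then show "sat_clause \<alpha> C" using sat_lift_clause'[of \<alpha>' \<alpha>, OF eq] by blast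
    qed
  qed
  then show ?thesis by (auto simp: dqbf_true_def)
qed

theorem lemma10:
  fixes \<Phi> :: "'v dqbf" and A :: "('v \<times> ('v \<rightharpoonup> bool)) set"
  assumes "wf_dqbf \<Phi>"
    and "A \<subseteq> arbiter_index \<Phi>"
  shows "dqbf_true \<Phi> \<longleftrightarrow> dqbf_true (add_arbiters \<Phi> A)"
  using fwd[OF assms] bwd by (auto simp: dqbf_true_def)

end
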